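(* The class of data languages accepted by SAFA is not closed under Kleene closure: there exists a data language $L$ accepted by some SAFA such that no SAFA accepts $L^*=\{u_1u_2\cdots u_n: n\geq 0,\ u_i\in L\}$.
   Context: $D$ is a fixed countably infinite set of data values; for a finite alphabet $\Sigma$, data words are elements of $(\Sigma\times D)^*$. A set augmented finite automaton (SAFA) is a tuple $M=(Q,\Sigma\times D,q_0,F,H,\delta)$: $Q$ finite set of states, $q_0\in Q$ initial, $F\subseteq Q$ final, $H=\{h_1,\dots,h_m\}$ a finite collection of (names of) sets of data values, $\delta\subseteq Q\times\Sigma\times C\times OP\times Q$ with $C=\{p(h_i),\,!p(h_i): h_i\in H\}$, $OP=\{-\}\cup\{\mathsf{ins}(h_i):h_i\in H\}$. Configurations are $(q,\langle S_1,\dots,S_m\rangle)$ with $S_i\subseteq D$ finite; initially state $q_0$ and all sets empty. On reading $(a,d)$, a transition $(q,a,\alpha,op,q')$ from the current state may be taken if $\alpha=p(h_i)$ and $d\in S_i$, or $\alpha=\,!p(h_i)$ and $d\notin S_i$; then the state becomes $q'$ and if $op=\mathsf{ins}(h_j)$ the value $d$ is added to $S_j$ ($op=-$ changes nothing). A word is accepted if some run reads it entirely and ends in $F$; $L(M)$ is the set of accepted words. *)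

theory Defs
  imports Main
begin

text \<open>Data values: the countably infinite set D is rendered as the type nat.
  Letters of the finite alphabet are natural numbers drawn from a finite set Sigma;
  states are natural numbers drawn from a finite set Q; the m sets h_1..h_m are
  indexed by 0..<m.\<close>

type_synonym data_word = "(nat \<times> nat) list"   \<comment> \<open>(letter, data value)\<close>

datatype cond = Pin nat | NotPin nat
datatype setop = NoOp | Ins nat

record safa =
  states :: "nat set"
  alph   :: "nat set"
  init   :: nat
  finals :: "nat set"
  nsets  :: nat
  trans  :: "(nat \<times> nat \<times> cond \<times> setop \<times> nat) set"

definition cond_idx :: "cond \<Rightarrow> nat" where
  "cond_idx c = (case c of Pin i \<Rightarrow> i | NotPin i \<Rightarrow> i)"

definition op_ok :: "nat \<Rightarrow> setop \<Rightarrow> bool" where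
  "op_ok m op = (case op of NoOp \<Rightarrow> True | Ins j \<Rightarrow> j < m)"

definition wf_safa :: "safa \<Rightarrow> bool" where
  "wf_safa M \<longleftrightarrow> finite (states M) \<and> finite (alph M) \<and> init M \<in> states M
     \<and> finals M \<subseteq> states M
     \<and> (\<forall>(q,a,c,op,q') \<in> trans M. q \<in> states M \<and> a \<in> alph M \<and> cond_idx c < nsets M
            \<and> op_ok (nsets M) op \<and> q' \<in> states M)"

definition sat :: "cond \<Rightarrow> (nat \<Rightarrow> nat set) \<Rightarrow> nat \<Rightarrow> bool" where
  "sat c S d = (case c of Pin i \<Rightarrow> d \<in> S i | NotPin i \<Rightarrow> d \<notin> S i)"

definition apply_op :: "setop \<Rightarrow> (nat \<Rightarrow> nat set) \<Rightarrow> nat \<Rightarrow> (nat \<Rightarrow> nat set)" where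
  "apply_op op S d = (case op of NoOp \<Rightarrow> S | Ins j \<Rightarrow> S(j := insert d (S j)))"

type_synonym config = "nat \<times> (nat \<Rightarrow> nat set)"

definition step :: "safa \<Rightarrow> config \<Rightarrow> nat \<times> nat \<Rightarrow> config \<Rightarrow> bool" where
  "step M c x c' \<longleftrightarrow> (\<exists>cd op. (fst c, fst x, cd, op, fst c') \<in> trans M
       \<and> sat cd (snd c) (snd x) \<and> snd c' = apply_op op (snd c) (snd x))"

inductive run :: "safa \<Rightarrow> config \<Rightarrow> data_word \<Rightarrow> config \<Rightarrow> bool" for M where
  run_nil: "run M c [] c"
| run_cons: "step M c x c' \<Longrightarrow> run M c' w c'' \<Longrightarrow> run M c (x # w) c''"

definition lang :: "safa \<Rightarrow> data_word set" where
  "lang M = {w. \<exists>c. run M (init M, \<lambda>_. {}) w c \<and> fst c \<in> finals M}"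

definition kleene_star :: "data_word set \<Rightarrow> data_word set" where
  "kleene_star L = {concat us | us. set us \<subseteq> L}"

end

theory Submission
  imports Defs
begin


lemma run_nil_iff: "run M c [] c' \<longleftrightarrow> c' = c"
  by (auto elim: run.cases intro: run.intros)

lemma run_cons_iff: "run M c (x # w) c'' \<longleftrightarrow> (\<exists>c'. step M c x c' \<and> run M c' w c'')"
  apply (rule iffI)
   apply (erule run.cases; auto)
  apply (auto intro: run.intros)
  done

lemma run_append: "run M c (u @ v) c'' \<longleftrightarrow> (\<exists>c'. run M c u c' \<and> run M c' v c'')"
  by (induction u arbitrary: c) (auto simp: run_nil_iff run_cons_iff)

lemma step_mono: "step M c x c' \<Longrightarrow> snd c j \<subseteq> snd c' j"
  unfolding step_def apply (elim exE conjE)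
  subgoal for cd op by (cases op) (auto simp: apply_op_def)
  done

lemma run_mono: "run M c w c' \<Longrightarrow> snd c j \<subseteq> snd c' j"
  by (induction rule: run.induct) (auto dest: step_mono[where j=j])

definition inv_S :: "nat \<Rightarrow> nat \<Rightarrow> (nat \<Rightarrow> nat set) \<Rightarrow> bool" where
  "inv_S m N S \<longleftrightarrow> (\<forall>j. S j \<subseteq> {..<N} \<and> (m \<le> j \<longrightarrow> S j = {}))"

lemma step_inv: "step M c x c' \<Longrightarrow> wf_safa M \<Longrightarrow> inv_S (nsets M) N (snd c) \<Longrightarrow> snd x < N
  \<Longrightarrow> inv_S (nsets M) N (snd c')"
proof -
  assume s: "step M c x c'" and w: "wf_safa M" and i: "inv_S (nsets M) N (snd c)" and x: "snd x < N"
  from s obtain cd op where t: "(fst c, fst x, cd, op, fst c') \<in> trans M"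
    and e: "snd c' = apply_op op (snd c) (snd x)" unfolding step_def by blast
  have "op_ok (nsets M) op" using w t unfolding wf_safa_def by fast
  then show ?thesis using e i x unfolding inv_S_def
    by (cases op) (auto simp: apply_op_def op_ok_def)
qed

lemma run_inv: "run M c w c' \<Longrightarrow> wf_safa M \<Longrightarrow> inv_S (nsets M) N (snd c) \<Longrightarrow> \<forall>x\<in>set w. snd x < N
  \<Longrightarrow> inv_S (nsets M) N (snd c')"
  by (induction rule: run.induct) (simp, metis list.set_intros step_inv)

definition mu :: "nat \<Rightarrow> (nat \<Rightarrow> nat set) \<Rightarrow> nat" where
  "mu m S = (\<Sum>j<m. card (S j))"

lemma mu_bound: "inv_S m N S \<Longrightarrow> mu m S \<le> m * N"
proof -
  assume "inv_S m N S"
  then have "\<And>j. card (S j) \<le> N" unfolding inv_S_def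
    by (metis card_lessThan card_mono finite_lessThan)
  then have "mu m S \<le> (\<Sum>j<m. N)" unfolding mu_def by (intro sum_mono) auto
  then show ?thesis by simp
qed

lemma mu_strict: "inv_S m N S \<Longrightarrow> inv_S m N S' \<Longrightarrow> (\<And>j. S j \<subseteq> S' j) \<Longrightarrow> S \<noteq> S' \<Longrightarrow> mu m S < mu m S'"
proof -
  assume a: "inv_S m N S" "inv_S m N S'" "\<And>j. S j \<subseteq> S' j" "S \<noteq> S'"
  then obtain j where j: "S j \<noteq> S' j" by (meson ext)
  have jm: "j < m" using a(1,2) j unfolding inv_S_def by (metis not_le)
  have fin: "\<And>j. finite (S' j)" using a(2) unfolding inv_S_def by (meson finite_lessThan finite_subset)
  have "card (S j) < card (S' j)" using a(3)[of j] j fin[of j] by (meson psubsetI psubset_card_mono)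
  moreover have "\<And>j. card (S j) \<le> card (S' j)" using a(3) fin by (simp add: card_mono)
  ultimately show ?thesis unfolding mu_def using jm
    by (intro sum_strict_mono_ex1) auto
qed

lemma stable:
  assumes "run M c (concat (replicate k rd)) c'" "wf_safa M" "inv_S (nsets M) N (snd c)"
    "\<forall>x\<in>set rd. snd x < N"
  shows "(\<exists>r c1 c2. r < k \<and> run M c (concat (replicate r rd)) c1 \<and> run M c1 rd c2 \<and> snd c1 = snd c2
      \<and> run M c2 (concat (replicate (k - r - 1) rd)) c')
    \<or> mu (nsets M) (snd c) + k \<le> mu (nsets M) (snd c')"
  using assms
proof (induction k arbitrary: c)
  case 0
  then show ?case by (simp add: run_nil_iff)
next
  case (Suc k)
  from Suc.prems(1) obtain c1 where r1: "run M c rd c1" and r2: "run M c1 (concat (replicate k rd)) c'"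
    by (auto simp: run_append)
  have inv1: "inv_S (nsets M) N (snd c1)" using run_inv[OF r1] Suc.prems by auto
  show ?case
  proof (cases "snd c = snd c1")
    case True
    then show ?thesis using r1 r2
      by (intro disjI1 exI[of _ 0] exI[of _ c] exI[of _ c1]) (auto simp: run_nil_iff)
  next
    case False
    have lt: "mu (nsets M) (snd c) < mu (nsets M) (snd c1)"
      using mu_strict[OF Suc.prems(3) inv1] run_mono[OF r1] False by auto
    from Suc.IH[OF r2 Suc.prems(2) inv1 Suc.prems(4)] show ?thesis
    proof
      assume "\<exists>r c1a c2. r < k \<and> run M c1 (concat (replicate r rd)) c1a \<and> run M c1a rd c2 \<and> snd c1a = snd c2
      \<and> run M c2 (concat (replicate (k - r - 1) rd)) c'"
      then obtain r c1a c2 where h: "r < k" "run M c1 (concat (replicate r rd)) c1a" "run M c1a rd c2"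
        "snd c1a = snd c2" "run M c2 (concat (replicate (k - r - 1) rd)) c'" by blast
      have "run M c (concat (replicate (Suc r) rd)) c1a" using r1 h(2) by (auto simp: run_append intro!: exI[of _ "fst c1"] exI[of _ "snd c1"])
      then show ?thesis using h by (intro disjI1 exI[of _ "Suc r"] exI[of _ c1a] exI[of _ c2]) auto
    next
      assume "mu (nsets M) (snd c1) + k \<le> mu (nsets M) (snd c')"
      then show ?thesis using lt by auto
    qed
  qed
qed

lemma step_perm: "step M c x c' \<Longrightarrow> inj \<pi> \<Longrightarrow>
  step M (fst c, \<lambda>j. \<pi> ` snd c j) (fst x, \<pi> (snd x)) (fst c', \<lambda>j. \<pi> ` snd c' j)"
  unfolding step_def
  apply (elim exE conjE)
  subgoal for cd op
    apply (rule exI[of _ cd], rule exI[of _ op])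
    apply (auto simp: sat_def apply_op_def inj_image_mem_iff fun_eq_iff split: cond.splits setop.splits)
    done
  done

lemma run_perm: "run M c w c' \<Longrightarrow> inj \<pi> \<Longrightarrow>
  run M (fst c, \<lambda>j. \<pi> ` snd c j) (map (\<lambda>x. (fst x, \<pi> (snd x))) w) (fst c', \<lambda>j. \<pi> ` snd c' j)"
  by (induction rule: run.induct) (auto intro: run.intros step_perm)



definition L0 :: "data_word set" where
  "L0 = {[(0,d),(0,d)] | d. True}"

definition M0 :: safa where
  "M0 = \<lparr>states = {0,1,2}, alph = {0}, init = 0, finals = {2}, nsets = 1,
         trans = {(0,0,NotPin 0,Ins 0,1), (1,0,Pin 0,NoOp,2)}\<rparr>"

lemma wf_M0: "wf_safa M0"
  by (auto simp: wf_safa_def M0_def cond_idx_def op_ok_def)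

lemma run2: "run M0 (2,S) w c \<Longrightarrow> w = []"
  by (cases w) (auto simp: run_cons_iff step_def M0_def)

lemma run1: "run M0 (1,S) w c \<Longrightarrow> fst c = 2 \<Longrightarrow> \<exists>d \<in> S 0. w = [(0,d)]"
proof (cases w)
  case Nil
  then show "run M0 (1,S) w c \<Longrightarrow> fst c = 2 \<Longrightarrow> ?thesis" by (auto simp: run_nil_iff)
next
  case (Cons x w')
  assume r: "run M0 (1,S) w c" "fst c = 2"
  then obtain c' where s: "step M0 (1,S) x c'" and r': "run M0 c' w' c" using Cons by (auto simp: run_cons_iff)
  from s have "fst c' = 2" "fst x = 0" "snd x \<in> S 0" by (auto simp: step_def M0_def sat_def)
  moreover have "w' = []" using r' \<open>fst c' = 2\<close> run2[of "snd c'"] by (metis prod.collapse)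
  ultimately show ?thesis using Cons by (metis prod.collapse)
qed

lemma run0: "run M0 (0,\<lambda>_. {}) w c \<Longrightarrow> fst c = 2 \<Longrightarrow> \<exists>d. w = [(0,d),(0,d)]"
proof (cases w)
  case Nil
  then show "run M0 (0,\<lambda>_. {}) w c \<Longrightarrow> fst c = 2 \<Longrightarrow> ?thesis" by (auto simp: run_nil_iff)
next
  case (Cons x w')
  assume r: "run M0 (0,\<lambda>_. {}) w c" "fst c = 2"
  then obtain c' where s: "step M0 (0,\<lambda>_. {}) x c'" and r': "run M0 c' w' c" using Cons by (auto simp: run_cons_iff)
  from s have "fst c' = 1" "fst x = 0" "snd c' = (\<lambda>_. {})(0 := {snd x})"
    by (auto simp: step_def M0_def sat_def apply_op_def)
  then obtain d' where "d' \<in> {snd x}" "w' = [(0,d')]"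
    using run1[of "snd c'" w' c] r' r(2) by (metis fun_upd_same prod.collapse)
  then show ?thesis using Cons \<open>fst x = 0\<close> by (metis prod.collapse singletonD)
qed


lemma lang_M0: "lang M0 = L0"
proof
  show "lang M0 \<subseteq> L0"
  proof
    fix w assume "w \<in> lang M0"
    then obtain c where "run M0 (0, \<lambda>_. {}) w c" "fst c \<in> {2}" unfolding lang_def by (auto simp: M0_def)
    then show "w \<in> L0" using run0 unfolding L0_def by blast
  qed
next
  show "L0 \<subseteq> lang M0"
  proof
    fix w assume "w \<in> L0"
    then obtain d where w: "w = [(0,d),(0,d)]" unfolding L0_def by blast
    have "step M0 (0, \<lambda>_. {}) (0,d) (1, (\<lambda>_. {})(0 := {d}))"
      unfolding step_def by (rule exI[of _ "NotPin 0"], rule exI[of _ "Ins 0"]) (auto simp: M0_def sat_def apply_op_def)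
    moreover have "step M0 (1, (\<lambda>_. {})(0 := {d})) (0,d) (2, (\<lambda>_. {})(0 := {d}))"
      unfolding step_def by (rule exI[of _ "Pin 0"], rule exI[of _ "NoOp"]) (auto simp: M0_def sat_def apply_op_def)
    ultimately have "run M0 (0, \<lambda>_. {}) w (2, (\<lambda>_. {})(0 := {d}))" unfolding w
      by (auto simp: run_cons_iff run_nil_iff)
    then show "w \<in> lang M0" unfolding lang_def by (auto simp: M0_def)
  qed
qed

lemma notin_star_aux: "set us \<subseteq> L0 \<Longrightarrow> concat us = xs @ (a,d) # (b,e) # ys \<Longrightarrow> even (length xs) \<Longrightarrow> d = e"
proof (induction us arbitrary: xs)
  case Nil
  then show ?case by simp
next
  case (Cons u us)
  then obtain c where u: "u = [(0,c),(0,c)]" unfolding L0_def by auto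
  show ?case
  proof (cases xs)
    case Nil
    then show ?thesis using Cons.prems u by simp
  next
    case (Cons x1 xs1)
    then show ?thesis
    proof (cases xs1)
      case Nil
      then show ?thesis using Cons \<open>even (length xs)\<close> \<open>xs = x1 # xs1\<close> by simp
    next
      case (Cons x2 xs2)
      have "concat us = xs2 @ (a,d) # (b,e) # ys" using Cons.prems(2) u \<open>xs = x1 # xs1\<close> Cons by simp
      moreover have "even (length xs2)" using Cons.prems(3) \<open>xs = x1 # xs1\<close> Cons by simp
      ultimately show ?thesis using Cons.IH Cons.prems(1) by simp
    qed
  qed
qed

lemma notin_star: "even (length xs) \<Longrightarrow> d \<noteq> e \<Longrightarrow> xs @ (a,d) # (b,e) # ys \<notin> kleene_star L0"
proof
  assume "even (length xs)" "d \<noteq> e" "xs @ (a,d) # (b,e) # ys \<in> kleene_star L0"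
  then obtain us where "set us \<subseteq> L0" "concat us = xs @ (a,d) # (b,e) # ys" unfolding kleene_star_def by auto
  then show False using notin_star_aux \<open>even (length xs)\<close> \<open>d \<noteq> e\<close> by metis
qed

definition pr :: "nat \<Rightarrow> data_word" where "pr t = [(0,t),(0,t)]"

lemma len_pr: "length (concat (map pr xs)) = 2 * length xs"
  by (induction xs) (auto simp: pr_def)

lemma star_in: "concat (replicate R (concat (map pr xs))) \<in> kleene_star L0"
proof -
  have "concat (replicate R (concat (map pr xs))) = concat (concat (replicate R (map pr xs)))"
    by (induction R) auto
  moreover have "set (concat (replicate R (map pr xs))) \<subseteq> L0" by (auto simp: L0_def pr_def)
  ultimately show ?thesis unfolding kleene_star_def by blast
qed



lemma pigeon:
  assumes "inv_S m N S" "N = 2^m + 1"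
  shows "\<exists>i k. i < N \<and> k < N \<and> i \<noteq> k \<and> (\<forall>j. i \<in> S j \<longleftrightarrow> k \<in> S j)"
proof -
  define f where "f d = {j. j < m \<and> d \<in> S j}" for d
  have "\<not> inj_on f {..<N}"
  proof
    assume "inj_on f {..<N}"
    moreover have "f ` {..<N} \<subseteq> Pow {..<m}" by (auto simp: f_def)
    ultimately have "card {..<N} \<le> card (Pow {..<m})" by (meson card_inj_on_le finite_Pow_iff finite_lessThan)
    then show False using assms(2) by (simp add: card_Pow)
  qed
  then obtain i k where ik: "i < N" "k < N" "i \<noteq> k" "f i = f k" unfolding inj_on_def by blast
  have "\<forall>j. i \<in> S j \<longleftrightarrow> k \<in> S j"
  proof
    fix j show "i \<in> S j \<longleftrightarrow> k \<in> S j"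
    proof (cases "j < m")
      case True
      then show ?thesis using ik(4) unfolding f_def by blast
    next
      case False
      then show ?thesis using assms(1) unfolding inv_S_def by auto
    qed
  qed
  then show ?thesis using ik by blast
qed

definition sw :: "nat \<Rightarrow> nat \<Rightarrow> nat \<Rightarrow> nat" where
  "sw i k x = (if x = i then k else if x = k then i else x)"

lemma sw_sw: "sw i k (sw i k x) = x"
  by (simp add: sw_def)

lemma sw_inj: "inj (sw i k)"
  by (rule injI) (metis sw_sw)

lemma sw_img: "x \<in> sw i k ` A \<longleftrightarrow> sw i k x \<in> A"
proof
  assume "x \<in> sw i k ` A"
  then obtain y where "y \<in> A" "x = sw i k y" by blast
  then show "sw i k x \<in> A" by (simp add: sw_sw)
next
  assume "sw i k x \<in> A"
  then have "sw i k (sw i k x) \<in> sw i k ` A" by (rule imageI)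
  then show "x \<in> sw i k ` A" by (simp add: sw_sw)
qed

lemma sw_inv: "(\<forall>j. i \<in> S j \<longleftrightarrow> k \<in> S j) \<Longrightarrow> (\<lambda>j. sw i k ` S j) = S"
proof (rule ext, rule set_eqI)
  fix j x assume a: "\<forall>j. i \<in> S j \<longleftrightarrow> k \<in> S j"
  have "x \<in> sw i k ` S j \<longleftrightarrow> sw i k x \<in> S j"
    by (rule sw_img)
  also have "\<dots> \<longleftrightarrow> x \<in> S j" using a[rule_format, of j] by (simp add: sw_def)
  finally show "x \<in> sw i k ` S j \<longleftrightarrow> x \<in> S j" .
qed

lemma rd_dec: "k < N \<Longrightarrow> concat (map pr [0..<N]) =
   concat (map pr [0..<k]) @ [(0,k)] @ ((0,k) # concat (map pr [Suc k..<N]))"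
proof -
  assume "k < N"
  then have "[0..<N] = [0..<k] @ k # [Suc k..<N]"
    using upt_add_eq_append[of 0 k "N - k"] upt_conv_Cons[of k N] by simp
  then show ?thesis by (simp add: pr_def)
qed

theorem theorem7:
  shows "\<exists>(Sigma :: nat set) (L :: data_word set).
           finite Sigma \<and>
           (\<exists>M. wf_safa M \<and> alph M = Sigma \<and> lang M = L) \<and>
           \<not> (\<exists>M'. wf_safa M' \<and> lang M' = kleene_star L)"
proof (intro exI[of _ "{0}"] exI[of _ L0] conjI)
  show "finite {0::nat}" by simp
  show "\<exists>M. wf_safa M \<and> alph M = {0} \<and> lang M = L0"
    using wf_M0 lang_M0 by (intro exI[of _ M0]) (auto simp: M0_def)
  show "\<not> (\<exists>M'. wf_safa M' \<and> lang M' = kleene_star L0)"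
  proof
    assume "\<exists>M'. wf_safa M' \<and> lang M' = kleene_star L0"
    then obtain M' where wf: "wf_safa M'" and lM: "lang M' = kleene_star L0" by blast
    define m where "m = nsets M'"
    define N :: nat where "N = 2^m + 1"
    define rd where "rd = concat (map pr [0..<N])"
    define R where "R = m * N + 1"
    have rdN: "\<forall>x\<in>set rd. snd x < N" by (auto simp: rd_def pr_def)
    have "concat (replicate R rd) \<in> lang M'" using star_in lM unfolding rd_def by auto
    then obtain cf where r0: "run M' (init M', \<lambda>_. {}) (concat (replicate R rd)) cf"
      and fin: "fst cf \<in> finals M'" unfolding lang_def by auto
    have inv0: "inv_S (nsets M') N (snd (init M', \<lambda>_. {}))" by (simp add: inv_S_def)
    from stable[OF r0 wf inv0 rdN]
    obtain r c1 c2 where h: "r < R" "run M' (init M', \<lambda>_. {}) (concat (replicate r rd)) c1"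
      "run M' c1 rd c2" "snd c1 = snd c2" "run M' c2 (concat (replicate (R - r - 1) rd)) cf"
    proof (elim disjE exE conjE)
      assume "mu (nsets M') (snd (init M', \<lambda>_. {})) + R \<le> mu (nsets M') (snd cf)"
      moreover have "inv_S (nsets M') N (snd cf)"
        using run_inv[OF r0 wf inv0] rdN by auto
      ultimately show ?thesis using mu_bound[of "nsets M'" N "snd cf"] unfolding R_def m_def mu_def
        by simp
    qed blast
    have inv1: "inv_S m N (snd c1)" using run_inv[OF h(2) wf inv0] rdN unfolding m_def by auto
    obtain i k where ik: "i < N" "k < N" "i \<noteq> k" "\<forall>j. i \<in> snd c1 j \<longleftrightarrow> k \<in> snd c1 j"
      using pigeon[OF inv1 N_def] by blast
    define A where "A = concat (map pr [0..<k])"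
    define B where "B = concat (map pr [Suc k..<N])"
    define pre where "pre = concat (replicate r rd)"
    define post where "post = concat (replicate (R - r - 1) rd)"
    have "rd = A @ [(0,k)] @ ((0,k) # B)" unfolding rd_def A_def B_def using rd_dec[OF ik(2)] .
    then obtain ca where ra: "run M' c1 A ca" and rca: "run M' ca ((0,k) # (0,k) # B) c2"
      using h(3) by (auto simp: run_append)
    then obtain cb where sb: "step M' ca (0,k) cb" and rc: "run M' cb ((0,k) # B) c2"
      by (auto simp: run_cons_iff)
    have rb: "run M' ca [(0,k)] cb" using sb by (blast intro: run.intros)
    have scb: "snd cb = snd c1"
    proof
      fix j
      show "snd cb j = snd c1 j"
        using run_mono[OF ra, of j] run_mono[OF rb, of j] run_mono[OF rc, of j] h(4) by auto
    qed
    have "run M' cb (((0,k) # B) @ post) cf" using rc h(5) unfolding post_def run_append by blast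
    then have rpost: "run M' cb ((0,k) # B @ post) cf" by simp
    have rp: "run M' (fst cb, \<lambda>j. sw i k ` snd cb j) (map (\<lambda>x. (fst x, sw i k (snd x))) ((0,k) # B @ post))
        (fst cf, \<lambda>j. sw i k ` snd cf j)"
      using run_perm[OF rpost sw_inj] by simp
    have eq: "(\<lambda>j. sw i k ` snd cb j) = snd cb" using sw_inv[of i "snd cb" k] ik(4) scb by simp
    have swk: "sw i k k = i" by (simp add: sw_def)
    have rp': "run M' cb ((0,i) # map (\<lambda>x. (fst x, sw i k (snd x))) (B @ post))
        (fst cf, \<lambda>j. sw i k ` snd cf j)" using rp unfolding eq by (simp add: swk)
    have "run M' (init M', \<lambda>_. {}) (pre @ A @ [(0,k)] @ ((0,i) # map (\<lambda>x. (fst x, sw i k (snd x))) (B @ post)))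
        (fst cf, \<lambda>j. sw i k ` snd cf j)"
      using h(2) ra rb rp' unfolding pre_def run_append by blast
    then have "(pre @ A) @ (0,k) # (0,i) # map (\<lambda>x. (fst x, sw i k (snd x))) (B @ post) \<in> lang M'"
      using fin unfolding lang_def by auto
    moreover have "even (length (pre @ A))"
    proof -
      have l: "length (concat (replicate r' xs)) = r' * length xs" for r' :: nat and xs :: data_word
        by (induction r') auto
      have "length (pre @ A) = r * (2 * N) + 2 * k"
        unfolding pre_def A_def rd_def using l[of r "concat (map pr [0..<N])"] len_pr[of "[0..<N]"] len_pr[of "[0..<k]"]
        by simp
      then show ?thesis by simp
    qed
    ultimately show False using notin_star ik(3) lM by metis
  qed
qed

end
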